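(* Let $G=(V,E)$ be a finite graph, $p_e\in(0,1)$ and $x_e>0$ for each $e\in E$. Let $\Omega=\{0,1\}^E$, $\Sigma\subset\Omega$, $f:\Omega\to2^\Sigma$, $f(\omega)=\Sigma^\downarrow(\omega):=\{\eta\in\Sigma\mid\eta\subset\omega\}$, and $$\rho[\omega]=\mathbb{P}_p[\omega]\ (\omega\in\Omega),\qquad \gamma[\eta]=\mathbb{P}_{\frac{x}{p+x}}[\eta\mid\Sigma]\propto\prod_{e\in\eta}\frac{x_e}{p_e}\ (\eta\in\Sigma).$$ Let $\mathscr{P}$ be the probability measure on $\Omega\times\Sigma$ with $\mathscr{P}[\omega,\eta]\propto\rho[\omega]\gamma[\eta]\mathbf{1}[\eta\in f(\omega)]$. Then: (a) The marginal $\mathscr{P}_\Sigma$ of $\mathscr{P}$ on $\Sigma$ satisfies $\mathscr{P}_\Sigma[\eta]\propto\prod_{e\in\eta}x_e$. For each $\omega$ with $\mathscr{P}_\Omega[\omega]\neq0$, $\mathscr{P}[\cdot\mid\omega]=\mathbb{P}_{\frac{x}{p+x}}[\cdot\mid\Sigma^\downarrow(\omega)]$. (b) The marginal of $\mathscr{P}$ on $\Omega$ is $\mathscr{P}_\Omega=\mathscr{P}_\Sigma\cup\mathbb{P}_p$. For each $\eta\in\Sigma$ with $\mathscr{P}_\Sigma[\eta]\neq0$, $\mathscr{P}[\cdot\mid\eta]=\mathbb{P}_p\cup\delta_\eta$, i.e. Bernoulli percolation on $E$ with parameters $(p_e)$ conditioned on all edges of $\eta$ being open.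
   Context: Elements of $\{0,1\}^E$ are identified with subsets of $E$ (open edges). For $r=(r_e)\in[0,1]^E$, $\mathbb{P}_r$ is Bernoulli percolation: each edge $e$ open independently with probability $r_e$; $\frac{x}{p+x}$ denotes the vector $(x_e/(p_e+x_e))_e$. $\delta_\eta$ is the Dirac mass at $\eta$. For measures $\pi,\nu$ on $\{0,1\}^E$, $\pi\cup\nu$ is the law of the union of independent samples of $\pi$ and $\nu$ (a measure on $\Sigma\subset\Omega$ being viewed as a measure on $\Omega$). *)

theory Defs
  imports Complex_Main
begin

text \<open>Configurations in \<open>{0,1}^E\<close> are identified with subsets of the finite edge set E.
  Probability measures on the finite set \<open>Pow E\<close> are represented by their mass functions
  \<open>'e set \<Rightarrow> real\<close> (zero off their support).\<close>

definition bern :: "'e set \<Rightarrow> ('e \<Rightarrow> real) \<Rightarrow> 'e set \<Rightarrow> real" where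
  "bern E r \<omega> = (if \<omega> \<subseteq> E then (\<Prod>e\<in>\<omega>. r e) * (\<Prod>e\<in>E - \<omega>. 1 - r e) else 0)"

definition cond_mass :: "('a \<Rightarrow> real) \<Rightarrow> 'a set \<Rightarrow> 'a \<Rightarrow> real" where
  "cond_mass \<mu> A a = (if a \<in> A then \<mu> a / (\<Sum>b\<in>A. \<mu> b) else 0)"

definition dirac :: "'a \<Rightarrow> 'a \<Rightarrow> real" where
  "dirac \<eta> a = (if a = \<eta> then 1 else 0)"

text \<open>\<open>\<pi> \<union> \<nu>\<close>: law of the union of independent samples of \<open>\<pi>\<close> and \<open>\<nu>\<close> (both on \<open>Pow E\<close>).\<close>
definition union_law :: "'e set \<Rightarrow> ('e set \<Rightarrow> real) \<Rightarrow> ('e set \<Rightarrow> real) \<Rightarrow> 'e set \<Rightarrow> real" where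
  "union_law E \<pi> \<nu> \<omega> = (\<Sum>(a, b) \<in> {(a, b). a \<subseteq> E \<and> b \<subseteq> E \<and> a \<union> b = \<omega>}. \<pi> a * \<nu> b)"

definition down_set :: "'e set set \<Rightarrow> 'e set \<Rightarrow> 'e set set" where
  "down_set \<Sigma> \<omega> = {\<eta> \<in> \<Sigma>. \<eta> \<subseteq> \<omega>}"

definition ratio_param :: "('e \<Rightarrow> real) \<Rightarrow> ('e \<Rightarrow> real) \<Rightarrow> 'e \<Rightarrow> real" where
  "ratio_param p x e = x e / (p e + x e)"

definition rho :: "'e set \<Rightarrow> ('e \<Rightarrow> real) \<Rightarrow> 'e set \<Rightarrow> real" where
  "rho E p = bern E p"

definition gamma :: "'e set \<Rightarrow> ('e \<Rightarrow> real) \<Rightarrow> ('e \<Rightarrow> real) \<Rightarrow> 'e set set \<Rightarrow> 'e set \<Rightarrow> real" where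
  "gamma E p x \<Sigma> = cond_mass (bern E (ratio_param p x)) \<Sigma>"

definition joint_weight :: "'e set \<Rightarrow> ('e \<Rightarrow> real) \<Rightarrow> ('e \<Rightarrow> real) \<Rightarrow> 'e set set \<Rightarrow> 'e set \<Rightarrow> 'e set \<Rightarrow> real" where
  "joint_weight E p x \<Sigma> \<omega> \<eta> =
     (if \<omega> \<subseteq> E \<and> \<eta> \<in> down_set \<Sigma> \<omega> then rho E p \<omega> * gamma E p x \<Sigma> \<eta> else 0)"

definition joint :: "'e set \<Rightarrow> ('e \<Rightarrow> real) \<Rightarrow> ('e \<Rightarrow> real) \<Rightarrow> 'e set set \<Rightarrow> 'e set \<Rightarrow> 'e set \<Rightarrow> real" where
  "joint E p x \<Sigma> \<omega> \<eta> = joint_weight E p x \<Sigma> \<omega> \<eta> /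
     (\<Sum>\<omega>'\<in>Pow E. \<Sum>\<eta>'\<in>\<Sigma>. joint_weight E p x \<Sigma> \<omega>' \<eta>')"

definition marg_Omega :: "'e set \<Rightarrow> ('e \<Rightarrow> real) \<Rightarrow> ('e \<Rightarrow> real) \<Rightarrow> 'e set set \<Rightarrow> 'e set \<Rightarrow> real" where
  "marg_Omega E p x \<Sigma> \<omega> = (\<Sum>\<eta>\<in>\<Sigma>. joint E p x \<Sigma> \<omega> \<eta>)"

definition marg_Sigma :: "'e set \<Rightarrow> ('e \<Rightarrow> real) \<Rightarrow> ('e \<Rightarrow> real) \<Rightarrow> 'e set set \<Rightarrow> 'e set \<Rightarrow> real" where
  "marg_Sigma E p x \<Sigma> \<eta> = (\<Sum>\<omega>\<in>Pow E. joint E p x \<Sigma> \<omega> \<eta>)"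

end

theory Submission imports Defs begin

lemma bern_sum:
  assumes "finite F" shows "(\<Sum>S\<in>Pow F. bern F r S) = 1"
proof -
  have "(\<Sum>S\<in>Pow F. bern F r S) = (\<Sum>S\<in>Pow F. (\<Prod>e\<in>S. r e) * (\<Prod>e\<in>F - S. 1 - r e))"
    by (rule sum.cong) (auto simp: bern_def)
  also have "\<dots> = (\<Prod>e\<in>F. r e + (1 - r e))"
    by (rule prod_add[symmetric]) fact
  finally show ?thesis by simp
qed

lemma bern_split:
  assumes "finite E" "A \<subseteq> E" "\<omega> \<subseteq> E"
  shows "bern E r \<omega> = bern A r (\<omega> \<inter> A) * bern (E - A) r (\<omega> - A)"
proof -
  have fin: "finite \<omega>" "finite (E - \<omega>)" using assms finite_subset by auto
  have 1: "(\<Prod>e\<in>\<omega>. r e) = (\<Prod>e\<in>\<omega> \<inter> A. r e) * (\<Prod>e\<in>\<omega> - A. r e)"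
    by (rule prod.Int_Diff) (fact fin)
  have 2: "(\<Prod>e\<in>E - \<omega>. 1 - r e) = (\<Prod>e\<in>(E - \<omega>) \<inter> A. 1 - r e) * (\<Prod>e\<in>(E - \<omega>) - A. 1 - r e)"
    by (rule prod.Int_Diff) (fact fin)
  have 3: "(E - \<omega>) \<inter> A = A - \<omega> \<inter> A" "(E - \<omega>) - A = (E - A) - (\<omega> - A)" using assms by auto
  show ?thesis using assms unfolding bern_def 1 2 3 by (auto simp: mult_ac)
qed

lemma sum_super:
  assumes "finite E" "\<eta> \<subseteq> E"
  shows "(\<Sum>\<omega>\<in>{\<omega>\<in>Pow E. \<eta> \<subseteq> \<omega>}. bern E r \<omega>) = (\<Prod>e\<in>\<eta>. r e)"
proof -
  have bij: "bij_betw (\<lambda>T. \<eta> \<union> T) (Pow (E - \<eta>)) {\<omega>\<in>Pow E. \<eta> \<subseteq> \<omega>}"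
    by (rule bij_betw_byWitness[where f' = "\<lambda>\<omega>. \<omega> - \<eta>"]) (use assms in auto)
  have "(\<Sum>\<omega>\<in>{\<omega>\<in>Pow E. \<eta> \<subseteq> \<omega>}. bern E r \<omega>) = (\<Sum>T\<in>Pow (E - \<eta>). bern E r (\<eta> \<union> T))"
    using sum.reindex_bij_betw[OF bij, of "bern E r"] by simp
  also have "\<dots> = (\<Sum>T\<in>Pow (E - \<eta>). (\<Prod>e\<in>\<eta>. r e) * bern (E - \<eta>) r T)"
  proof (rule sum.cong)
    fix T assume T: "T \<in> Pow (E - \<eta>)"
    have "bern E r (\<eta> \<union> T) = bern \<eta> r ((\<eta> \<union> T) \<inter> \<eta>) * bern (E - \<eta>) r ((\<eta> \<union> T) - \<eta>)"
      by (rule bern_split) (use assms T in auto)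
    also have "(\<eta> \<union> T) \<inter> \<eta> = \<eta>" by auto
    also have "(\<eta> \<union> T) - \<eta> = T" using T by auto
    finally show "bern E r (\<eta> \<union> T) = (\<Prod>e\<in>\<eta>. r e) * bern (E - \<eta>) r T"
      by (simp add: bern_def)
  qed simp
  also have "\<dots> = (\<Prod>e\<in>\<eta>. r e)"
    using bern_sum[of "E - \<eta>" r] assms by (simp add: sum_distrib_left[symmetric])
  finally show ?thesis .
qed

lemma sum_union:
  assumes "finite E" "a \<subseteq> \<omega>" "\<omega> \<subseteq> E"
  shows "(\<Sum>b\<in>{b\<in>Pow E. a \<union> b = \<omega>}. bern E r b) = bern (E - a) r (\<omega> - a)"
proof -
  have bij: "bij_betw (\<lambda>S. (\<omega> - a) \<union> S) (Pow a) {b\<in>Pow E. a \<union> b = \<omega>}"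
    by (rule bij_betw_byWitness[where f' = "\<lambda>b. b \<inter> a"]) (use assms in auto)
  have "(\<Sum>b\<in>{b\<in>Pow E. a \<union> b = \<omega>}. bern E r b) = (\<Sum>S\<in>Pow a. bern E r ((\<omega> - a) \<union> S))"
    using sum.reindex_bij_betw[OF bij, of "bern E r"] by simp
  also have "\<dots> = (\<Sum>S\<in>Pow a. bern a r S * bern (E - a) r (\<omega> - a))"
  proof (rule sum.cong)
    fix S assume S: "S \<in> Pow a"
    have "bern E r ((\<omega> - a) \<union> S) = bern a r (((\<omega> - a) \<union> S) \<inter> a) * bern (E - a) r (((\<omega> - a) \<union> S) - a)"
      by (rule bern_split) (use assms S in auto)
    also have "((\<omega> - a) \<union> S) \<inter> a = S" using S by auto
    also have "((\<omega> - a) \<union> S) - a = \<omega> - a" using S by auto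
    finally show "bern E r ((\<omega> - a) \<union> S) = bern a r S * bern (E - a) r (\<omega> - a)" .
  qed simp
  also have "\<dots> = bern (E - a) r (\<omega> - a)"
    using bern_sum[of a r] assms finite_subset[of a E] by (simp add: sum_distrib_right[symmetric])
  finally show ?thesis .
qed

lemma bern_pos:
  assumes "finite E" "\<And>e. e \<in> E \<Longrightarrow> 0 < r e \<and> r e < 1" "\<omega> \<subseteq> E"
  shows "bern E r \<omega> > 0"
  using assms unfolding bern_def
  by (auto intro!: mult_pos_pos prod_pos dest: subsetD)

theorem proposition3p1:
  fixes E :: "'e set" and p x :: "'e \<Rightarrow> real" and \<Sigma> :: "'e set set"
  assumes finE: "finite E"
    and p_range: "\<And>e. e \<in> E \<Longrightarrow> 0 < p e \<and> p e < 1"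
    and x_pos: "\<And>e. e \<in> E \<Longrightarrow> 0 < x e"
    and Sigma_sub: "\<Sigma> \<subseteq> Pow E"
    and Sigma_ne: "\<Sigma> \<noteq> {}"
  shows
    \<comment> \<open>(a)\<close>
    "(\<exists>c>0. \<forall>\<eta>\<in>\<Sigma>. marg_Sigma E p x \<Sigma> \<eta> = c * (\<Prod>e\<in>\<eta>. x e))
     \<and> (\<forall>\<omega>\<in>Pow E. marg_Omega E p x \<Sigma> \<omega> \<noteq> 0 \<longrightarrow>
          (\<forall>\<eta>. joint E p x \<Sigma> \<omega> \<eta> / marg_Omega E p x \<Sigma> \<omega>
                 = cond_mass (bern E (ratio_param p x)) (down_set \<Sigma> \<omega>) \<eta>))
     \<comment> \<open>(b)\<close>
     \<and> (\<forall>\<omega>\<in>Pow E. marg_Omega E p x \<Sigma> \<omega> = union_law E (marg_Sigma E p x \<Sigma>) (bern E p) \<omega>)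
     \<and> (\<forall>\<eta>\<in>\<Sigma>. marg_Sigma E p x \<Sigma> \<eta> \<noteq> 0 \<longrightarrow>
          (\<forall>\<omega>\<in>Pow E. joint E p x \<Sigma> \<omega> \<eta> / marg_Sigma E p x \<Sigma> \<eta>
                 = union_law E (bern E p) (dirac \<eta>) \<omega>
             \<and> joint E p x \<Sigma> \<omega> \<eta> / marg_Sigma E p x \<Sigma> \<eta>
                 = cond_mass (bern E p) {\<omega>'\<in>Pow E. \<eta> \<subseteq> \<omega>'} \<omega>))"
proof -
  define q where "q = ratio_param p x"
  define B where "B = bern E q"
  define SB where "SB = (\<Sum>b\<in>\<Sigma>. B b)"
  define W where "W = joint_weight E p x \<Sigma>"
  define Z where "Z = (\<Sum>\<omega>'\<in>Pow E. \<Sum>\<eta>'\<in>\<Sigma>. W \<omega>' \<eta>')"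
  define C where "C = (\<Prod>e\<in>E. p e / (p e + x e))"
  have finS: "finite \<Sigma>" using finE Sigma_sub finite_subset by blast
  have q_range: "0 < q e \<and> q e < 1" if "e \<in> E" for e
    using p_range[OF that] x_pos[OF that] by (auto simp: q_def ratio_param_def field_simps)
  have Bpos: "B \<eta> > 0" if "\<eta> \<subseteq> E" for \<eta>
    unfolding B_def by (rule bern_pos[OF finE q_range that])
  have SBpos: "SB > 0"
    unfolding SB_def using Sigma_ne Sigma_sub finS Bpos by (intro sum_pos) auto
  have ppos: "bern E p \<omega> > 0" if "\<omega> \<subseteq> E" for \<omega>
    by (rule bern_pos[OF finE p_range that])
  have prodp_pos: "(\<Prod>e\<in>\<eta>. p e) > 0" if "\<eta> \<subseteq> E" for \<eta>
    using that p_range by (intro prod_pos) auto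
  have Cpos: "C > 0" unfolding C_def using p_range x_pos by (intro prod_pos) (auto intro: divide_pos_pos add_pos_pos)
  have W_eq: "W \<omega> \<eta> = (if \<omega> \<subseteq> E \<and> \<eta> \<in> \<Sigma> \<and> \<eta> \<subseteq> \<omega> then bern E p \<omega> * (B \<eta> / SB) else 0)" for \<omega> \<eta>
    by (simp add: W_def joint_weight_def down_set_def rho_def gamma_def cond_mass_def B_def SB_def q_def)
  have Wnn: "W \<omega> \<eta> \<ge> 0" for \<omega> \<eta>
  proof (cases "\<omega> \<subseteq> E \<and> \<eta> \<in> \<Sigma> \<and> \<eta> \<subseteq> \<omega>")
    case True
    then have "bern E p \<omega> > 0" "B \<eta> > 0" using ppos Bpos Sigma_sub by auto
    then show ?thesis using True SBpos by (simp add: W_eq)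
  next
    case False
    then show ?thesis by (subst W_eq) (simp only: if_not_P[OF False] if_False order_refl)
  qed
  obtain \<eta>0 where \<eta>0: "\<eta>0 \<in> \<Sigma>" using Sigma_ne by auto
  have "0 < W E \<eta>0" unfolding W_eq using \<eta>0 Sigma_sub ppos[of E] Bpos[of \<eta>0] SBpos by auto
  also have "W E \<eta>0 \<le> (\<Sum>\<eta>'\<in>\<Sigma>. W E \<eta>')"
    by (rule member_le_sum) (use \<eta>0 finS Wnn in auto)
  also have "\<dots> \<le> Z" unfolding Z_def
    by (rule member_le_sum[of E "Pow E" "\<lambda>\<omega>'. \<Sum>\<eta>'\<in>\<Sigma>. W \<omega>' \<eta>'"]) (use finE Wnn in \<open>auto intro: sum_nonneg\<close>)
  finally have Zpos: "Z > 0" .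
  have joint_eq: "joint E p x \<Sigma> \<omega> \<eta> = W \<omega> \<eta> / Z" for \<omega> \<eta>
    by (simp add: joint_def W_def Z_def)
  have mS: "marg_Sigma E p x \<Sigma> \<eta> = (if \<eta> \<in> \<Sigma> then (B \<eta> / SB) * (\<Prod>e\<in>\<eta>. p e) / Z else 0)" for \<eta>
  proof (cases "\<eta> \<in> \<Sigma>")
    case True
    then have sub: "\<eta> \<subseteq> E" using Sigma_sub by auto
    have "marg_Sigma E p x \<Sigma> \<eta> = (\<Sum>\<omega>\<in>Pow E. if \<eta> \<subseteq> \<omega> then bern E p \<omega> * (B \<eta> / SB) else 0) / Z"
      unfolding marg_Sigma_def joint_eq sum_divide_distrib[symmetric] using True
      by (intro arg_cong2[where f="(/)"] sum.cong) (auto simp: W_eq)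
    also have "\<dots> = (\<Sum>\<omega>\<in>{\<omega>\<in>Pow E. \<eta> \<subseteq> \<omega>}. bern E p \<omega>) * (B \<eta> / SB) / Z"
      by (simp add: sum.inter_filter[symmetric] finE sum_distrib_right[symmetric] sum_divide_distrib[symmetric])
    also have "\<dots> = (B \<eta> / SB) * (\<Prod>e\<in>\<eta>. p e) / Z"
      using sum_super[OF finE sub, of p] by simp
    finally show ?thesis using True by simp
  next
    case False
    then show ?thesis by (simp add: marg_Sigma_def joint_eq W_eq)
  qed
  have mO: "marg_Omega E p x \<Sigma> \<omega> = bern E p \<omega> * (\<Sum>\<eta>\<in>down_set \<Sigma> \<omega>. B \<eta>) / SB / Z"
    if "\<omega> \<subseteq> E" for \<omega>
  proof -
    have "marg_Omega E p x \<Sigma> \<omega> = (\<Sum>\<eta>\<in>\<Sigma>. if \<eta> \<subseteq> \<omega> then bern E p \<omega> * (B \<eta> / SB) else 0) / Z"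
      unfolding marg_Omega_def joint_eq sum_divide_distrib[symmetric] using that
      by (intro arg_cong2[where f="(/)"] sum.cong) (auto simp: W_eq)
    also have "\<dots> = (\<Sum>\<eta>\<in>down_set \<Sigma> \<omega>. bern E p \<omega> * (B \<eta> / SB)) / Z"
      by (simp add: sum.inter_filter[symmetric] finS down_set_def)
    also have "\<dots> = bern E p \<omega> * (\<Sum>\<eta>\<in>down_set \<Sigma> \<omega>. B \<eta>) / SB / Z"
      by (simp add: sum_distrib_left sum_divide_distrib)
    finally show ?thesis .
  qed
  have Bprod: "B \<eta> * (\<Prod>e\<in>\<eta>. p e) = C * (\<Prod>e\<in>\<eta>. x e)" if sub: "\<eta> \<subseteq> E" for \<eta>
  proof -
    have fin: "finite \<eta>" using sub finE finite_subset by blast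
    have "B \<eta> = (\<Prod>e\<in>\<eta>. x e / (p e + x e)) * (\<Prod>e\<in>E - \<eta>. p e / (p e + x e))"
    proof -
      have "(\<Prod>e\<in>E - \<eta>. 1 - q e) = (\<Prod>e\<in>E - \<eta>. p e / (p e + x e))"
      proof (rule prod.cong)
        fix e assume "e \<in> E - \<eta>"
        then have "p e + x e > 0" using p_range x_pos by (auto intro: add_pos_pos)
        then show "1 - q e = p e / (p e + x e)" by (simp add: q_def ratio_param_def field_simps)
      qed simp
      then show ?thesis using sub by (simp add: B_def bern_def q_def ratio_param_def)
    qed
    also have "\<dots> * (\<Prod>e\<in>\<eta>. p e) = (\<Prod>e\<in>\<eta>. x e) * ((\<Prod>e\<in>\<eta>. p e / (p e + x e)) * (\<Prod>e\<in>E - \<eta>. p e / (p e + x e)))"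
      by (simp add: prod_dividef prod.distrib mult_ac)
    also have "(\<Prod>e\<in>\<eta>. p e / (p e + x e)) * (\<Prod>e\<in>E - \<eta>. p e / (p e + x e)) = C"
      unfolding C_def using prod.subset_diff[OF sub finE, of "\<lambda>e. p e / (p e + x e)"] by (simp add: mult_ac)
    finally show ?thesis by (simp add: mult_ac)
  qed
  have partA1: "\<exists>c>0. \<forall>\<eta>\<in>\<Sigma>. marg_Sigma E p x \<Sigma> \<eta> = c * (\<Prod>e\<in>\<eta>. x e)"
  proof (intro exI[of _ "C / (SB * Z)"] conjI ballI)
    show "C / (SB * Z) > 0" using Cpos SBpos Zpos by simp
    fix \<eta> assume h: "\<eta> \<in> \<Sigma>"
    then have "\<eta> \<subseteq> E" using Sigma_sub by auto
    from Bprod[OF this] show "marg_Sigma E p x \<Sigma> \<eta> = C / (SB * Z) * (\<Prod>e\<in>\<eta>. x e)"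
      unfolding mS using h SBpos Zpos by (simp add: field_simps)
  qed
  have partA2: "\<forall>\<omega>\<in>Pow E. marg_Omega E p x \<Sigma> \<omega> \<noteq> 0 \<longrightarrow>
          (\<forall>\<eta>. joint E p x \<Sigma> \<omega> \<eta> / marg_Omega E p x \<Sigma> \<omega>
                 = cond_mass (bern E (ratio_param p x)) (down_set \<Sigma> \<omega>) \<eta>)"
  proof (intro ballI impI allI)
    fix \<omega> \<eta> assume \<omega>: "\<omega> \<in> Pow E" and ne: "marg_Omega E p x \<Sigma> \<omega> \<noteq> 0"
    then have sub: "\<omega> \<subseteq> E" by auto
    have SDne: "(\<Sum>\<eta>\<in>down_set \<Sigma> \<omega>. B \<eta>) \<noteq> 0" using ne mO[OF sub] by auto
    have bp: "bern E p \<omega> > 0" using ppos[OF sub] .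
    show "joint E p x \<Sigma> \<omega> \<eta> / marg_Omega E p x \<Sigma> \<omega>
                 = cond_mass (bern E (ratio_param p x)) (down_set \<Sigma> \<omega>) \<eta>"
      unfolding joint_eq mO[OF sub] W_eq cond_mass_def B_def[symmetric] q_def[symmetric]
      using SDne bp SBpos Zpos sub
      by (auto simp: down_set_def field_simps B_def)
  qed
  have partB1: "\<forall>\<omega>\<in>Pow E. marg_Omega E p x \<Sigma> \<omega> = union_law E (marg_Sigma E p x \<Sigma>) (bern E p) \<omega>"
  proof
    fix \<omega> assume "\<omega> \<in> Pow E"
    then have sub: "\<omega> \<subseteq> E" by auto
    have set_eq: "{(a, b). a \<subseteq> E \<and> b \<subseteq> E \<and> a \<union> b = \<omega>} = Sigma (Pow E) (\<lambda>a. {b\<in>Pow E. a \<union> b = \<omega>})"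
      by auto
    have "union_law E (marg_Sigma E p x \<Sigma>) (bern E p) \<omega>
        = (\<Sum>a\<in>Pow E. marg_Sigma E p x \<Sigma> a * (\<Sum>b\<in>{b\<in>Pow E. a \<union> b = \<omega>}. bern E p b))"
      unfolding union_law_def set_eq using finE
      by (subst sum.Sigma[symmetric]) (auto simp: sum_distrib_left)
    also have "\<dots> = (\<Sum>a\<in>Pow E. if a \<in> down_set \<Sigma> \<omega> then bern E p \<omega> * B a / SB / Z else 0)"
    proof (rule sum.cong)
      fix a assume a: "a \<in> Pow E"
      show "marg_Sigma E p x \<Sigma> a * (\<Sum>b\<in>{b\<in>Pow E. a \<union> b = \<omega>}. bern E p b)
          = (if a \<in> down_set \<Sigma> \<omega> then bern E p \<omega> * B a / SB / Z else 0)"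
      proof (cases "a \<in> down_set \<Sigma> \<omega>")
        case True
        then have aw: "a \<subseteq> \<omega>" and aS: "a \<in> \<Sigma>" by (auto simp: down_set_def)
        have split: "bern E p \<omega> = bern a p (\<omega> \<inter> a) * bern (E - a) p (\<omega> - a)"
          by (rule bern_split) (use a sub finE in auto)
        have "\<omega> \<inter> a = a" using aw by auto
        then have split': "bern E p \<omega> = (\<Prod>e\<in>a. p e) * bern (E - a) p (\<omega> - a)"
          using split by (simp add: bern_def)
        show ?thesis using True aS
          unfolding sum_union[OF finE aw sub] mS split' by (simp add: field_simps)
      next
        case False
        then have "a \<notin> \<Sigma> \<or> \<not> a \<subseteq> \<omega>" by (auto simp: down_set_def)
        then show ?thesis
        proof
          assume "a \<notin> \<Sigma>" then show ?thesis using False by (simp add: mS)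
        next
          assume "\<not> a \<subseteq> \<omega>"
          then have "{b\<in>Pow E. a \<union> b = \<omega>} = {}" by auto
          then show ?thesis using False by (simp only: if_False sum.empty mult_zero_right if_not_P[OF False])
        qed
      qed
    qed simp
    also have "\<dots> = (\<Sum>a\<in>down_set \<Sigma> \<omega>. bern E p \<omega> * B a / SB / Z)"
    proof -
      have "Pow E \<inter> down_set \<Sigma> \<omega> = down_set \<Sigma> \<omega>" using Sigma_sub by (auto simp: down_set_def)
      then show ?thesis using sum.inter_restrict[of "Pow E" "\<lambda>a. bern E p \<omega> * B a / SB / Z" "down_set \<Sigma> \<omega>"] finE
        by simp
    qed
    also have "\<dots> = marg_Omega E p x \<Sigma> \<omega>"
      unfolding mO[OF sub] by (simp add: sum_distrib_left sum_divide_distrib)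
    finally show "marg_Omega E p x \<Sigma> \<omega> = union_law E (marg_Sigma E p x \<Sigma>) (bern E p) \<omega>" by simp
  qed
  have partB2: "\<forall>\<eta>\<in>\<Sigma>. marg_Sigma E p x \<Sigma> \<eta> \<noteq> 0 \<longrightarrow>
          (\<forall>\<omega>\<in>Pow E. joint E p x \<Sigma> \<omega> \<eta> / marg_Sigma E p x \<Sigma> \<eta>
                 = union_law E (bern E p) (dirac \<eta>) \<omega>
             \<and> joint E p x \<Sigma> \<omega> \<eta> / marg_Sigma E p x \<Sigma> \<eta>
                 = cond_mass (bern E p) {\<omega>'\<in>Pow E. \<eta> \<subseteq> \<omega>'} \<omega>)"
  proof (intro ballI impI)
    fix \<eta> \<omega> assume \<eta>: "\<eta> \<in> \<Sigma>" and "marg_Sigma E p x \<Sigma> \<eta> \<noteq> 0" and \<omega>: "\<omega> \<in> Pow E"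
    have etaE: "\<eta> \<subseteq> E" using \<eta> Sigma_sub by auto
    have sub: "\<omega> \<subseteq> E" using \<omega> by auto
    have Pp: "(\<Prod>e\<in>\<eta>. p e) > 0" using prodp_pos[OF etaE] .
    have Bp: "B \<eta> > 0" using Bpos[OF etaE] .
    define R where "R = (if \<eta> \<subseteq> \<omega> then bern E p \<omega> / (\<Prod>e\<in>\<eta>. p e) else 0)"
    have L: "joint E p x \<Sigma> \<omega> \<eta> / marg_Sigma E p x \<Sigma> \<eta> = R"
      unfolding joint_eq mS W_eq R_def using \<eta> sub Pp Bp SBpos Zpos by (auto simp: field_simps)
    have set_eq: "{(a, b). a \<subseteq> E \<and> b \<subseteq> E \<and> a \<union> b = \<omega>} = Sigma (Pow E) (\<lambda>a. {b\<in>Pow E. a \<union> b = \<omega>})"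
      by auto
    have "union_law E (bern E p) (dirac \<eta>) \<omega>
        = (\<Sum>a\<in>Pow E. bern E p a * (\<Sum>b\<in>{b\<in>Pow E. a \<union> b = \<omega>}. dirac \<eta> b))"
      unfolding union_law_def set_eq using finE
      by (subst sum.Sigma[symmetric]) (auto simp: sum_distrib_left)
    also have "\<dots> = (\<Sum>a\<in>Pow E. if \<eta> \<union> a = \<omega> then bern E p a else 0)"
      using finE etaE by (intro sum.cong) (auto simp: dirac_def Un_commute)
    also have "\<dots> = (\<Sum>a\<in>{a\<in>Pow E. \<eta> \<union> a = \<omega>}. bern E p a)"
      by (simp add: sum.inter_filter[symmetric] finE)
    also have "\<dots> = R"
    proof (cases "\<eta> \<subseteq> \<omega>")
      case True
      have split: "bern E p \<omega> = bern \<eta> p (\<omega> \<inter> \<eta>) * bern (E - \<eta>) p (\<omega> - \<eta>)"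
        by (rule bern_split) (use etaE sub finE in auto)
      have "\<omega> \<inter> \<eta> = \<eta>" using True by auto
      then have split': "bern E p \<omega> = (\<Prod>e\<in>\<eta>. p e) * bern (E - \<eta>) p (\<omega> - \<eta>)"
        using split by (simp add: bern_def)
      show ?thesis unfolding sum_union[OF finE True sub] R_def split' using True Pp by simp
    next
      case False
      have e: "{a\<in>Pow E. \<eta> \<union> a = \<omega>} = {}" using False by auto
      show ?thesis unfolding e R_def using False by simp
    qed
    finally have U: "union_law E (bern E p) (dirac \<eta>) \<omega> = R" .
    have "cond_mass (bern E p) {\<omega>'\<in>Pow E. \<eta> \<subseteq> \<omega>'} \<omega> = R"
      unfolding cond_mass_def sum_super[OF finE etaE] R_def using sub by auto
    then show "joint E p x \<Sigma> \<omega> \<eta> / marg_Sigma E p x \<Sigma> \<eta> = union_law E (bern E p) (dirac \<eta>) \<omega>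
             \<and> joint E p x \<Sigma> \<omega> \<eta> / marg_Sigma E p x \<Sigma> \<eta> = cond_mass (bern E p) {\<omega>'\<in>Pow E. \<eta> \<subseteq> \<omega>'} \<omega>"
      using L U by simp
  qed
  show ?thesis using partA1 partA2 partB1 partB2 by blast
qed

end
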